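(* Let $G$ be a finite simple graph with $n$ vertices whose degrees, listed in non-decreasing order, are $d_1 \le d_2 \le \dots \le d_n$. Let $\lambda \ge 0$ be the largest integer such that $$\sum_{i=1}^{\lambda} \left\lceil \frac{d_i}{2} + 1 \right\rceil \le \sum_{i=\lambda+1}^{n} \left\lfloor \frac{d_i}{2} \right\rfloor,$$ where an empty sum (e.g. $\sum_{i=1}^{0}$) equals $0$. Then $\gamma_s(G) \ge n - 2\lambda$.
   Context: For a vertex $v$ of $G$, $N[v]$ denotes the closed neighbourhood of $v$ (i.e. $v$ together with its neighbours). A signed domination function of $G$ is a function $f: V(G) \to \{-1, 1\}$ such that $\sum_{x \in N[v]} f(x) \ge 1$ for every vertex $v \in V(G)$. The weight of $f$ is $f(V(G)) = \sum_{v \in V(G)} f(v)$. The signed domination number $\gamma_s(G)$ is the minimum weight of a signed domination function of $G$. *)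

theory Defs
  imports Complex_Main "HOL-Library.Multiset"
begin

definition simple_graph :: "'a set \<Rightarrow> ('a \<Rightarrow> 'a \<Rightarrow> bool) \<Rightarrow> bool" where
  "simple_graph V E \<longleftrightarrow> finite V \<and> (\<forall>u v. E u v \<longrightarrow> u \<in> V \<and> v \<in> V)
     \<and> (\<forall>u v. E u v \<longrightarrow> E v u) \<and> (\<forall>v. \<not> E v v)"

definition degree :: "'a set \<Rightarrow> ('a \<Rightarrow> 'a \<Rightarrow> bool) \<Rightarrow> 'a \<Rightarrow> nat" where
  "degree V E v = card {u \<in> V. E v u}"

definition closed_nbhd :: "'a set \<Rightarrow> ('a \<Rightarrow> 'a \<Rightarrow> bool) \<Rightarrow> 'a \<Rightarrow> 'a set" where
  "closed_nbhd V E v = insert v {u \<in> V. E v u}"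

text \<open>Degree sequence in non-decreasing order; d_i is (degree_seq V E) ! (i - 1).\<close>
definition degree_seq :: "'a set \<Rightarrow> ('a \<Rightarrow> 'a \<Rightarrow> bool) \<Rightarrow> nat list" where
  "degree_seq V E = sorted_list_of_multiset (image_mset (degree V E) (mset_set V))"

definition signed_dom_fun :: "'a set \<Rightarrow> ('a \<Rightarrow> 'a \<Rightarrow> bool) \<Rightarrow> ('a \<Rightarrow> int) \<Rightarrow> bool" where
  "signed_dom_fun V E f \<longleftrightarrow> (\<forall>v\<in>V. f v \<in> {-1, 1})
     \<and> (\<forall>v\<in>V. (\<Sum>x\<in>closed_nbhd V E v. f x) \<ge> 1)"

definition signed_dom_number :: "'a set \<Rightarrow> ('a \<Rightarrow> 'a \<Rightarrow> bool) \<Rightarrow> int" where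
  "signed_dom_number V E = Min {(\<Sum>v\<in>V. f v) | f. signed_dom_fun V E f}"

definition lam_ok :: "nat list \<Rightarrow> nat \<Rightarrow> bool" where
  "lam_ok ds k \<longleftrightarrow>
     (\<Sum>i = 1..k. \<lceil>real (ds ! (i - 1)) / 2 + 1\<rceil>)
       \<le> (\<Sum>i = k + 1..length ds. \<lfloor>real (ds ! (i - 1)) / 2\<rfloor>)"

text \<open>lambda: the largest k (0 \<le> k \<le> n) satisfying the inequality (k = 0 always does).\<close>
definition lam :: "nat list \<Rightarrow> nat" where
  "lam ds = (GREATEST k. k \<le> length ds \<and> lam_ok ds k)"

end

theory Submission
  imports Defs
begin

lemma take_sum_le:
  fixes \<phi> :: "nat \<Rightarrow> nat"
  assumes "mono \<phi>" "sorted ds" "A \<subseteq># mset ds" "size A = p"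
  shows "sum_list (map \<phi> (take p ds)) \<le> sum_mset (image_mset \<phi> A)"
  using assms(2-4)
proof (induction ds arbitrary: A p)
  case Nil then show ?case by simp
next
  case (Cons x xs)
  show ?case
  proof (cases p)
    case 0 then show ?thesis by simp
  next
    case (Suc q)
    show ?thesis
    proof (cases "x \<in># A")
      case True
      have A: "A = add_mset x (A - {#x#})" using True by simp
      have "add_mset x (A - {#x#}) \<subseteq># add_mset x (mset xs)" using Cons.prems A by simp
      hence "A - {#x#} \<subseteq># mset xs" by simp
      moreover have "size (A - {#x#}) = q" using True Cons.prems Suc by (simp add: size_Diff_submset)
      moreover have "sorted xs" using Cons.prems by simp
      ultimately have "sum_list (map \<phi> (take q xs)) \<le> sum_mset (image_mset \<phi> (A - {#x#}))"
        using Cons.IH by blast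
      moreover have "sum_mset (image_mset \<phi> A) = \<phi> x + sum_mset (image_mset \<phi> (A - {#x#}))"
        using arg_cong[OF A, of "\<lambda>M. sum_mset (image_mset \<phi> M)"] by simp
      ultimately show ?thesis using Suc by simp
    next
      case False
      have sub: "A \<subseteq># mset xs"
        unfolding subseteq_mset_def
      proof (intro allI)
        fix y
        have "count A y \<le> count (mset (x # xs)) y"
          by (rule mset_subset_eq_count[OF Cons.prems(2)])
        then show "count A y \<le> count (mset xs) y" using False
          by (cases "y = x") (auto simp: not_in_iff)
      qed
      obtain a where a: "a \<in># A" using Cons.prems Suc by (cases A) auto
      have A: "A = add_mset a (A - {#a#})" using a by simp
      have "a \<in> set xs" using mset_subset_eqD[OF sub a] by simp
      hence "x \<le> a" using Cons.prems by simp
      hence le: "\<phi> x \<le> \<phi> a" using assms(1) by (simp add: monoD)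
      have "A - {#a#} \<subseteq># mset xs" using subset_mset.order_trans[OF diff_subset_eq_self sub] .
      moreover have "size (A - {#a#}) = q" using a Cons.prems Suc by (simp add: size_Diff_submset)
      moreover have "sorted xs" using Cons.prems by simp
      ultimately have "sum_list (map \<phi> (take q xs)) \<le> sum_mset (image_mset \<phi> (A - {#a#}))"
        using Cons.IH by blast
      then have "\<phi> x + sum_list (map \<phi> (take q xs)) \<le> \<phi> a + sum_mset (image_mset \<phi> (A - {#a#}))"
        using le by simp
      moreover have "sum_mset (image_mset \<phi> A) = \<phi> a + sum_mset (image_mset \<phi> (A - {#a#}))"
        using arg_cong[OF A, of "\<lambda>M. sum_mset (image_mset \<phi> M)"] by simp
      ultimately show ?thesis using Suc by simp
    qed
  qed
qed

lemma c1: "\<lceil>real d / 2 + 1\<rceil> = int ((d+1) div 2 + 1)"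
proof (cases "even d")
  case True then obtain m where "d = 2*m" by blast
  then show ?thesis by simp
next
  case False then obtain m where "d = 2*m+1" using oddE by blast
  then show ?thesis by (simp add: ceiling_eq_iff)
qed

lemma c2: "\<lfloor>real d / 2\<rfloor> = int (d div 2)"
  by (metis floor_divide_of_nat_eq of_nat_numeral)

lemma shift1: fixes k :: nat shows "(\<Sum>i = 1..k. F (i - 1)) = (\<Sum>i<k. (F i :: int))"
  by (induction k) (auto simp: sum.cl_ivl_Suc)

lemma shift2: fixes k n :: nat shows "k \<le> n \<Longrightarrow> (\<Sum>i = k + 1..n. F (i - 1)) = (\<Sum>i\<in>{k..<n}. (F i :: int))"
proof (induction n)
  case 0 then show ?case by simp
next
  case (Suc n)
  show ?case
  proof (cases "k = Suc n")
    case True then show ?thesis by simp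
  next
    case False
    then have "k \<le> n" using Suc.prems by simp
    then show ?thesis using Suc.IH by (simp add: sum.cl_ivl_Suc)
  qed
qed

lemma sum_take: "k \<le> length ds \<Longrightarrow> sum_list (map F (take k ds)) = (\<Sum>i<k. (F (ds ! i) :: nat))"
proof -
  assume k: "k \<le> length ds"
  have "sum_list (map F (take k ds)) = (\<Sum>i = 0..<length (map F (take k ds)). map F (take k ds) ! i)"
    by (rule sum_list_sum_nth)
  also have "\<dots> = (\<Sum>i<k. F (ds ! i))" using k
    by (auto simp: atLeast0LessThan intro!: sum.cong)
  finally show ?thesis .
qed

lemma lam_ge:
  fixes ds :: "nat list"
  assumes k: "k \<le> length ds"
    and le: "sum_list (map (\<lambda>d. (d+1) div 2 + 1 + d div 2) (take k ds)) \<le> sum_list (map (\<lambda>d. d div 2) ds)"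
  shows "k \<le> lam ds"
proof -
  define g where "g = (\<lambda>d::nat. (d+1) div 2 + 1)"
  define h where "h = (\<lambda>d::nat. d div 2)"
  have A: "(\<Sum>i<k. g (ds ! i)) + (\<Sum>i<k. h (ds ! i)) \<le> (\<Sum>i<length ds. h (ds ! i))"
  proof -
    have "(\<Sum>i<k. g (ds ! i)) + (\<Sum>i<k. h (ds ! i)) = sum_list (map (\<lambda>d. (d+1) div 2 + 1 + d div 2) (take k ds))"
      using k by (simp add: sum_take g_def h_def sum.distrib[symmetric])
    also have "\<dots> \<le> sum_list (map h ds)" using le by (simp add: h_def)
    also have "\<dots> = (\<Sum>i<length ds. h (ds ! i))" using sum_take[of "length ds" ds h] by simp
    finally show ?thesis .
  qed
  have split: "(\<Sum>i<length ds. h (ds ! i)) = (\<Sum>i<k. h (ds ! i)) + (\<Sum>i\<in>{k..<length ds}. h (ds ! i))"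
    using sum.atLeastLessThan_concat[of 0 k "length ds" "\<lambda>i. h (ds ! i)"] k by (simp add: atLeast0LessThan)
  have ok: "lam_ok ds k"
  proof -
    have "(\<Sum>i = 1..k. \<lceil>real (ds ! (i - 1)) / 2 + 1\<rceil>) = (\<Sum>i<k. \<lceil>real (ds ! i) / 2 + 1\<rceil>)"
      by (rule shift1[of "\<lambda>i. \<lceil>real (ds ! i) / 2 + 1\<rceil>" k])
    also have "\<dots> = (\<Sum>i<k. int (g (ds ! i)))" by (simp only: c1 g_def)
    finally have L: "(\<Sum>i = 1..k. \<lceil>real (ds ! (i - 1)) / 2 + 1\<rceil>) = (\<Sum>i<k. int (g (ds ! i)))" .
    have "(\<Sum>i = k + 1..length ds. \<lfloor>real (ds ! (i - 1)) / 2\<rfloor>) = (\<Sum>i\<in>{k..<length ds}. \<lfloor>real (ds ! i) / 2\<rfloor>)"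
      by (rule shift2[of k "length ds" "\<lambda>i. \<lfloor>real (ds ! i) / 2\<rfloor>", OF k])
    also have "\<dots> = (\<Sum>i\<in>{k..<length ds}. int (h (ds ! i)))" by (simp only: c2 h_def)
    finally have R: "(\<Sum>i = k + 1..length ds. \<lfloor>real (ds ! (i - 1)) / 2\<rfloor>) = (\<Sum>i\<in>{k..<length ds}. int (h (ds ! i)))" .
    have "(\<Sum>i<k. int (g (ds ! i))) \<le> (\<Sum>i\<in>{k..<length ds}. int (h (ds ! i)))"
    proof -
      have "(\<Sum>i<k. g (ds ! i)) \<le> (\<Sum>i\<in>{k..<length ds}. h (ds ! i))" using A split by linarith
      then show ?thesis by (metis of_nat_le_iff of_nat_sum)
    qed
    then show ?thesis unfolding lam_ok_def L R .
  qed
  show ?thesis unfolding lam_def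
    by (rule Greatest_le_nat[where b="length ds"]) (use k ok in auto)
qed

lemma card_if_int: "finite A \<Longrightarrow> (\<Sum>x\<in>A. if P x then 1 else 0 :: int) = int (card {x\<in>A. P x})"
  using sum.inter_filter[of A "\<lambda>_. 1::int" P] by simp

lemma card_if_nat: "finite A \<Longrightarrow> (\<Sum>x\<in>A. if P x then 1 else 0 :: nat) = card {x\<in>A. P x}"
  using sum.inter_filter[of A "\<lambda>_. 1::nat" P] by simp

lemma nbhd_sum:
  assumes sg: "simple_graph V E" and sd: "\<forall>v\<in>V. f v \<in> {-1,1}" and v: "v \<in> V"
  shows "(\<Sum>x\<in>closed_nbhd V E v. f x) = f v + 2 * int (card {u\<in>V. E v u \<and> f u = 1}) - int (degree V E v)"
proof -
  let ?N = "{u\<in>V. E v u}"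
  have fin: "finite ?N" using sg unfolding simple_graph_def by simp
  have vN: "v \<notin> ?N" using sg unfolding simple_graph_def by simp
  have 1: "(\<Sum>x\<in>closed_nbhd V E v. f x) = f v + sum f ?N" unfolding closed_nbhd_def using fin vN by simp
  have "sum f ?N = (\<Sum>u\<in>?N. 2 * (if f u = 1 then 1 else 0) - 1)"
  proof (rule sum.cong)
    fix u assume "u \<in> ?N"
    then have "f u \<in> {-1,1}" using sd by auto
    then show "f u = 2 * (if f u = 1 then 1 else 0) - 1" by auto
  qed simp
  also have "\<dots> = 2 * (\<Sum>u\<in>?N. (if f u = 1 then 1 else 0)) - int (card ?N)"
    by (simp add: sum_subtractf sum_distrib_left)
  also have "(\<Sum>u\<in>?N. (if f u = 1 then 1 else 0 :: int)) = int (card {u\<in>?N. f u = 1})"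
    by (rule card_if_int[OF fin])
  also have "{u\<in>?N. f u = 1} = {u\<in>V. E v u \<and> f u = 1}" by auto
  finally show ?thesis using 1 unfolding degree_def by simp
qed

lemma main_bound:
  assumes sg: "simple_graph V E" and sdf: "signed_dom_fun V E f"
  shows "(\<Sum>v\<in>V. f v) \<ge> int (card V) - 2 * int (lam (degree_seq V E))"
proof -
  have finV: "finite V" using sg unfolding simple_graph_def by simp
  have sd: "\<forall>v\<in>V. f v \<in> {-1,1}" and dom: "\<forall>v\<in>V. (\<Sum>x\<in>closed_nbhd V E v. f x) \<ge> 1"
    using sdf unfolding signed_dom_fun_def by auto
  have sym: "\<And>u v. E u v \<Longrightarrow> E v u" using sg unfolding simple_graph_def by blast
  define M where "M = {v\<in>V. f v = 1}"
  define P where "P = {v\<in>V. f v \<noteq> 1}"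
  define deg where "deg = degree V E"
  define g where "g = (\<lambda>d::nat. (d+1) div 2 + 1)"
  define h where "h = (\<lambda>d::nat. d div 2)"
  have finM: "finite M" and finP: "finite P" using finV by (auto simp: M_def P_def)
  have VMP: "V = M \<union> P" and disj: "M \<inter> P = {}" by (auto simp: M_def P_def)
  have Pm: "\<And>v. v \<in> P \<Longrightarrow> f v = -1" using sd by (auto simp: P_def)
  have weight: "(\<Sum>v\<in>V. f v) = int (card V) - 2 * int (card P)"
  proof -
    have "(\<Sum>v\<in>V. f v) = sum f M + sum f P" using VMP disj finM finP by (simp add: sum.union_disjoint)
    also have "sum f M = int (card M)" by (simp add: M_def)
    also have "sum f P = - int (card P)" using Pm by simp
    also have "card V = card M + card P" using VMP disj finM finP by (simp add: card_Un_disjoint)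
    ultimately show ?thesis by simp
  qed
  have Pg: "g (deg v) \<le> card {u\<in>M. E v u}" if v: "v \<in> P" for v
  proof -
    have vV: "v \<in> V" using v by (simp add: P_def)
    have "{u\<in>V. E v u \<and> f u = 1} = {u\<in>M. E v u}" by (auto simp: M_def)
    then have "1 \<le> f v + 2 * int (card {u\<in>M. E v u}) - int (deg v)"
      using nbhd_sum[OF sg sd vV] dom[rule_format, OF vV] by (simp add: deg_def)
    then have "int (deg v) + 2 \<le> 2 * int (card {u\<in>M. E v u})" using Pm[OF v] by simp
    then have "deg v + 2 \<le> 2 * card {u\<in>M. E v u}" by linarith
    then show ?thesis unfolding g_def by linarith
  qed
  have Mh: "card {w\<in>P. E u w} \<le> h (deg u)" if u: "u \<in> M" for u
  proof -
    have uV: "u \<in> V" and fu: "f u = 1" using u by (auto simp: M_def)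
    let ?A = "{w\<in>V. E u w \<and> f w = 1}"
    have "1 \<le> f u + 2 * int (card ?A) - int (deg u)"
      using nbhd_sum[OF sg sd uV] dom[rule_format, OF uV] by (simp add: deg_def)
    then have c: "deg u \<le> 2 * card ?A" using fu by simp
    have "{w\<in>P. E u w} = {w\<in>V. E u w} - ?A" by (auto simp: P_def)
    moreover have "?A \<subseteq> {w\<in>V. E u w}" by auto
    moreover have "finite {w\<in>V. E u w}" using finV by simp
    moreover have "card ({w\<in>V. E u w} - ?A) = card {w\<in>V. E u w} - card ?A"
      by (rule card_Diff_subset) (use finV in auto)
    ultimately have "card {w\<in>P. E u w} = deg u - card ?A"
      by (simp add: deg_def degree_def)
    moreover have "card ?A \<le> deg u" unfolding deg_def degree_def
      using finV by (intro card_mono) auto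
    ultimately show ?thesis using c unfolding h_def by linarith
  qed
  have dc: "(\<Sum>v\<in>P. card {u\<in>M. E v u}) = (\<Sum>u\<in>M. card {w\<in>P. E u w})"
  proof -
    have "(\<Sum>v\<in>P. card {u\<in>M. E v u}) = (\<Sum>v\<in>P. \<Sum>u\<in>M. if E v u then 1 else 0)"
      using finM by (simp add: card_if_nat)
    also have "\<dots> = (\<Sum>u\<in>M. \<Sum>v\<in>P. if E v u then 1 else 0)" by (rule sum.swap)
    also have "\<dots> = (\<Sum>u\<in>M. \<Sum>v\<in>P. if E u v then 1 else 0)"
      by (intro sum.cong refl) (use sym in auto)
    also have "\<dots> = (\<Sum>u\<in>M. card {w\<in>P. E u w})"
      using finP by (simp add: card_if_nat)
    finally show ?thesis .
  qed
  have key: "(\<Sum>v\<in>P. g (deg v) + h (deg v)) \<le> (\<Sum>v\<in>V. h (deg v))"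
  proof -
    have "(\<Sum>v\<in>P. g (deg v)) \<le> (\<Sum>v\<in>P. card {u\<in>M. E v u})" by (rule sum_mono) (rule Pg)
    also have "\<dots> = (\<Sum>u\<in>M. card {w\<in>P. E u w})" by (rule dc)
    also have "\<dots> \<le> (\<Sum>u\<in>M. h (deg u))" by (rule sum_mono) (rule Mh)
    finally have "(\<Sum>v\<in>P. g (deg v)) \<le> (\<Sum>u\<in>M. h (deg u))" .
    moreover have "(\<Sum>v\<in>V. h (deg v)) = (\<Sum>v\<in>M. h (deg v)) + (\<Sum>v\<in>P. h (deg v))"
      using VMP disj finM finP by (simp add: sum.union_disjoint)
    ultimately show ?thesis by (simp add: sum.distrib)
  qed
  define ds where "ds = degree_seq V E"
  have mds: "mset ds = image_mset deg (mset_set V)"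
    unfolding ds_def degree_seq_def deg_def by simp
  have sds: "sorted ds" unfolding ds_def degree_seq_def by simp
  have len: "length ds = card V" using arg_cong[OF mds, of size] by simp
  define \<phi> where "\<phi> = (\<lambda>d::nat. (d+1) div 2 + 1 + d div 2)"
  have mono: "mono \<phi>" unfolding \<phi>_def
    by (intro monoI add_mono div_le_mono) auto
  have sub: "image_mset deg (mset_set P) \<subseteq># mset ds" unfolding mds
    by (intro image_mset_subseteq_mono) (use finP finV VMP in simp)
  have "sum_list (map \<phi> (take (card P) ds)) \<le> sum_mset (image_mset \<phi> (image_mset deg (mset_set P)))"
    by (rule take_sum_le[OF mono sds sub]) simp
  also have "\<dots> = (\<Sum>v\<in>P. g (deg v) + h (deg v))"
    by (simp add: sum_unfold_sum_mset image_mset.compositionality \<phi>_def g_def h_def comp_def)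
  also have "\<dots> \<le> (\<Sum>v\<in>V. h (deg v))" by (rule key)
  also have "\<dots> = sum_list (map h ds)"
  proof -
    have "sum_list (map h ds) = sum_mset (mset (map h ds))" by (rule sum_mset_sum_list[symmetric])
    also have "\<dots> = sum_mset (image_mset h (image_mset deg (mset_set V)))" by (simp add: mds[symmetric])
    also have "\<dots> = (\<Sum>v\<in>V. h (deg v))" by (simp add: sum_unfold_sum_mset image_mset.compositionality comp_def)
    finally show ?thesis by simp
  qed
  finally have "sum_list (map \<phi> (take (card P) ds)) \<le> sum_list (map h ds)" .
  moreover have "card P \<le> length ds" using len VMP finV by (simp add: card_mono)
  ultimately have "card P \<le> lam ds" using lam_ge[of "card P" ds] unfolding \<phi>_def h_def by blast
  then show ?thesis using weight unfolding ds_def by simp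
qed

theorem theorem6:
  fixes V :: "'a set" and E :: "'a \<Rightarrow> 'a \<Rightarrow> bool"
  assumes "simple_graph V E"
  shows "signed_dom_number V E \<ge> int (card V) - 2 * int (lam (degree_seq V E))"
proof -
  let ?S = "{(\<Sum>v\<in>V. f v) | f. signed_dom_fun V E f}"
  have finV: "finite V" using assms unfolding simple_graph_def by simp
  have sub: "?S \<subseteq> {- int (card V) .. int (card V)}"
  proof
    fix x assume "x \<in> ?S"
    then obtain f where x: "x = (\<Sum>v\<in>V. f v)" and f: "signed_dom_fun V E f" by blast
    have b: "\<bar>f v\<bar> = 1" if "v \<in> V" for v using f that unfolding signed_dom_fun_def by auto
    have "\<bar>x\<bar> \<le> (\<Sum>v\<in>V. \<bar>f v\<bar>)" unfolding x by (rule sum_abs)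
    also have "\<dots> = int (card V)" using b by simp
    finally show "x \<in> {- int (card V) .. int (card V)}" by auto
  qed
  have fin: "finite ?S" by (rule finite_subset[OF sub]) simp
  have one: "signed_dom_fun V E (\<lambda>_. 1)"
    unfolding signed_dom_fun_def
  proof (intro conjI ballI)
    fix v assume v: "v \<in> V"
    have "finite (closed_nbhd V E v)" unfolding closed_nbhd_def using finV by simp
    moreover have "v \<in> closed_nbhd V E v" unfolding closed_nbhd_def by simp
    ultimately have "card (closed_nbhd V E v) \<ge> 1"
      by (metis One_nat_def Suc_leI card_gt_0_iff empty_iff)
    then show "1 \<le> (\<Sum>x\<in>closed_nbhd V E v. (1::int))" by simp
  qed simp
  have ne: "?S \<noteq> {}" using one by blast
  have "Min ?S \<in> ?S" using fin ne by (rule Min_in)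
  then obtain f where m: "Min ?S = (\<Sum>v\<in>V. f v)" and f: "signed_dom_fun V E f" by blast
  show ?thesis unfolding signed_dom_number_def m by (rule main_bound[OF assms f])
qed

end
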